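(* Let $m,n$ be positive integers with $n\ge2$, and let $p$ be a prime with $p>n+1$ and $p\nmid m$. Then \[ R_n^{(m)}(p)\equiv\sum_{a=1}^{n-1}\binom{m+n-a-1}{n-1}S_n^{(a)}(p)\pmod p, \] and for every integer $r\ge 2$, \[ R_n^{(m)}(p^r)\equiv m\,S_n^{(1)}(p^2)\,p^{r-2}\pmod{p^r}. \]
   Context: For a prime $p$, $\mathcal P_p$ denotes the set of positive integers not divisible by $p$. For positive integers $m,n,r$ with $p\nmid m$: $R_n^{(m)}(p^r):=\sum\frac{1}{l_1\cdots l_n}$ over all $(l_1,\dots,l_n)\in\mathcal P_p^n$ with $l_1+\dots+l_n=mp^r$; $S_n^{(m)}(p^r):=\sum\frac{1}{l_1\cdots l_n}$ over all $(l_1,\dots,l_n)\in\mathcal P_p^n$ with all $l_i<p^r$ and $l_1+\dots+l_n=mp^r$. Congruences are between rationals with denominators prime to $p$: $x\equiv y\pmod{p^k}$ means $x-y\in p^k\mathbb Z_{(p)}$. Binomial coefficients $\binom{x}{k}$ with $0\le x<k$ are $0$. *)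

theory Defs
  imports Complex_Main "HOL-Computational_Algebra.Primes"
begin

definition coprimeP :: "nat \<Rightarrow> nat set" where
  "coprimeP p = {l. 0 < l \<and> \<not> p dvd l}"

text \<open>n-tuples (l_1,...,l_n) represented as functions on {0..<n}, zero outside,
  with all entries in P_p and summing to N.\<close>
definition tuplesR :: "nat \<Rightarrow> nat \<Rightarrow> nat \<Rightarrow> (nat \<Rightarrow> nat) set" where
  "tuplesR p n N = {l. (\<forall>i<n. l i \<in> coprimeP p) \<and> (\<forall>i\<ge>n. l i = 0)
                       \<and> (\<Sum>i<n. l i) = N}"

definition R_sum :: "nat \<Rightarrow> nat \<Rightarrow> nat \<Rightarrow> nat \<Rightarrow> rat" where
  "R_sum p n m r = (\<Sum>l\<in>tuplesR p n (m * p ^ r). 1 / (\<Prod>i<n. of_nat (l i)))"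

definition S_sum :: "nat \<Rightarrow> nat \<Rightarrow> nat \<Rightarrow> nat \<Rightarrow> rat" where
  "S_sum p n m r = (\<Sum>l\<in>{l \<in> tuplesR p n (m * p ^ r). \<forall>i<n. l i < p ^ r}.
                       1 / (\<Prod>i<n. of_nat (l i)))"

text \<open>x \<equiv> y (mod p^k) for rationals: x - y \<in> p^k Z_(p).\<close>
definition rat_cong :: "rat \<Rightarrow> rat \<Rightarrow> nat \<Rightarrow> nat \<Rightarrow> bool" where
  "rat_cong x y p k \<longleftrightarrow> (\<exists>a b :: int. \<not> int p dvd b \<and>
        x - y = of_int (int p ^ k) * of_int a / of_int b)"

end

theory Submission
  imports Defs "HOL-Library.FuncSet"
begin


definition Zp :: "nat \<Rightarrow> rat set" where
  "Zp p = {x. \<exists>a b::int. \<not> int p dvd b \<and> x = of_int a / of_int b}"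

definition vd :: "nat \<Rightarrow> nat \<Rightarrow> rat \<Rightarrow> bool" where
  "vd p k x \<longleftrightarrow> (\<exists>z\<in>Zp p. x = of_nat p ^ k * z)"

context fixes p :: nat assumes pp: "prime p" begin

lemma Zp_of_int[simp]: "of_int a \<in> Zp p"
proof -
  have "p \<noteq> 1" using pp by auto
  then have "\<not> int p dvd 1" by simp
  then show ?thesis unfolding Zp_def by (intro CollectI exI[of _ a] exI[of _ 1]) simp
qed

lemma Zp_of_nat[simp]: "of_nat a \<in> Zp p"
  using Zp_of_int[of "int a"] by simp

lemma Zp_0[simp]: "0 \<in> Zp p" and Zp_1[simp]: "1 \<in> Zp p"
  using Zp_of_int[of 0] Zp_of_int[of 1] by auto

lemma pdvd_mult: "\<not> int p dvd b \<Longrightarrow> \<not> int p dvd d \<Longrightarrow> \<not> int p dvd (b * d)"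
proof -
  have "prime (int p)" using pp by simp
  then show "\<not> int p dvd b \<Longrightarrow> \<not> int p dvd d \<Longrightarrow> \<not> int p dvd (b * d)" using prime_dvd_mult_iff by blast
qed

lemma Zp_mult[intro]: "x \<in> Zp p \<Longrightarrow> y \<in> Zp p \<Longrightarrow> x * y \<in> Zp p"
  unfolding Zp_def
proof (elim CollectE exE conjE, intro CollectI)
  fix a b c d :: int assume h: "\<not> int p dvd b" "x = of_int a / of_int b" "\<not> int p dvd d" "y = of_int c / of_int d"
  show "\<exists>a b. \<not> int p dvd b \<and> x * y = rat_of_int a / rat_of_int b"
    by (rule exI[of _ "a*c"], rule exI[of _ "b*d"]) (use h pdvd_mult in auto)
qed

lemma Zp_add[intro]: "x \<in> Zp p \<Longrightarrow> y \<in> Zp p \<Longrightarrow> x + y \<in> Zp p"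
  unfolding Zp_def
proof (elim CollectE exE conjE, intro CollectI)
  fix a b c d :: int assume h: "\<not> int p dvd b" "x = of_int a / of_int b" "\<not> int p dvd d" "y = of_int c / of_int d"
  have "b \<noteq> 0" "d \<noteq> 0" using h by auto
  then show "\<exists>a b. \<not> int p dvd b \<and> x + y = rat_of_int a / rat_of_int b"
    by (intro exI[of _ "a*d + c*b"] exI[of _ "b*d"]) (use h pdvd_mult in \<open>auto simp: field_simps\<close>)
qed

lemma Zp_uminus[intro]: "x \<in> Zp p \<Longrightarrow> - x \<in> Zp p"
  unfolding Zp_def
proof (elim CollectE exE conjE, intro CollectI)
  fix a b :: int assume h: "\<not> int p dvd b" "x = of_int a / of_int b"
  show "\<exists>a b. \<not> int p dvd b \<and> - x = rat_of_int a / rat_of_int b"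
    by (intro exI[of _ "-a"] exI[of _ "b"]) (use h in auto)
qed

lemma Zp_diff[intro]: "x \<in> Zp p \<Longrightarrow> y \<in> Zp p \<Longrightarrow> x - y \<in> Zp p"
  using Zp_add[of x "-y"] Zp_uminus[of y] by simp

lemma Zp_sum[intro]: "(\<And>i. i \<in> A \<Longrightarrow> f i \<in> Zp p) \<Longrightarrow> sum f A \<in> Zp p"
  by (induction A rule: infinite_finite_induct) auto

lemma Zp_prod[intro]: "(\<And>i. i \<in> A \<Longrightarrow> f i \<in> Zp p) \<Longrightarrow> prod f A \<in> Zp p"
  by (induction A rule: infinite_finite_induct) auto

lemma Zp_inv_nat[intro]: "\<not> p dvd x \<Longrightarrow> 1 / of_nat x \<in> Zp p"
  unfolding Zp_def by (intro CollectI exI[of _ 1] exI[of _ "int x"]) (auto simp: int_dvd_int_iff)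

lemma Zp_inv_int[intro]: "\<not> int p dvd x \<Longrightarrow> 1 / of_int x \<in> Zp p"
  unfolding Zp_def by (intro CollectI exI[of _ 1] exI[of _ "x"]) auto

lemma Zp_pow[intro]: "x \<in> Zp p \<Longrightarrow> x ^ k \<in> Zp p"
  by (induction k) auto

lemma vd_0[simp]: "vd p k 0"
  unfolding vd_def by (rule bexI[of _ 0]) auto

lemma vd_Zp: "x \<in> Zp p \<Longrightarrow> vd p 0 x"
  unfolding vd_def by auto

lemma vd_add[intro]: "vd p k x \<Longrightarrow> vd p k y \<Longrightarrow> vd p k (x + y)"
  unfolding vd_def by (auto simp: distrib_left[symmetric])

lemma vd_uminus[intro]: "vd p k x \<Longrightarrow> vd p k (- x)"
  unfolding vd_def by (auto) (metis Zp_uminus mult_minus_right)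

lemma vd_diff[intro]: "vd p k x \<Longrightarrow> vd p k y \<Longrightarrow> vd p k (x - y)"
  using vd_add[of k x "-y"] vd_uminus[of k y] by simp

lemma vd_sum[intro]: "(\<And>i. i \<in> A \<Longrightarrow> vd p k (f i)) \<Longrightarrow> vd p k (sum f A)"
  by (induction A rule: infinite_finite_induct) auto

lemma vd_mult: "vd p j x \<Longrightarrow> vd p k y \<Longrightarrow> vd p (j + k) (x * y)"
  unfolding vd_def
proof (elim bexE)
  fix z w assume "z \<in> Zp p" "w \<in> Zp p" "x = of_nat p ^ j * z" "y = of_nat p ^ k * w"
  then show "\<exists>z\<in>Zp p. x * y = of_nat p ^ (j + k) * z"
    by (intro bexI[of _ "z*w"]) (auto simp: power_add)
qed

lemma vd_multZ: "z \<in> Zp p \<Longrightarrow> vd p k y \<Longrightarrow> vd p k (z * y)"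
  using vd_mult[of 0 z k y] vd_Zp by simp

lemma vd_multZ': "z \<in> Zp p \<Longrightarrow> vd p k y \<Longrightarrow> vd p k (y * z)"
  using vd_multZ[of z k y] by (simp add: mult.commute)

lemma vd_ppow: "vd p k y \<Longrightarrow> vd p (j + k) (of_nat p ^ j * y)"
  unfolding vd_def by (elim bexE, rule_tac x=z in bexI) (auto simp: power_add)

lemma vd_mono: "j \<le> k \<Longrightarrow> vd p k x \<Longrightarrow> vd p j x"
  unfolding vd_def
proof (elim bexE)
  fix z assume "j \<le> k" "z \<in> Zp p" "x = of_nat p ^ k * z"
  then show "\<exists>z\<in>Zp p. x = of_nat p ^ j * z"
    by (intro bexI[of _ "of_nat p ^ (k - j) * z"]) (auto simp: power_add[symmetric] intro!: Zp_mult Zp_pow)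
qed

lemma vd_int: "int p ^ k dvd a \<Longrightarrow> vd p k (of_int a)"
  unfolding vd_def by (elim dvdE) (auto intro!: bexI)

lemma vd_nat: "p ^ k dvd a \<Longrightarrow> vd p k (of_nat a)"
  using vd_int[of k "int a"] by (metis of_int_of_nat_eq of_nat_dvd_iff of_nat_power)

lemma rat_cong_vd: "rat_cong x y p k \<longleftrightarrow> vd p k (x - y)"
proof
  assume "rat_cong x y p k"
  then obtain a b :: int where "\<not> int p dvd b" "x - y = of_int (int p ^ k) * of_int a / of_int b"
    unfolding rat_cong_def by blast
  then show "vd p k (x - y)" unfolding vd_def Zp_def
    by (intro bexI[of _ "of_int a / of_int b"]) auto
next
  assume "vd p k (x - y)"
  then obtain a b :: int where "\<not> int p dvd b" "x - y = of_nat p ^ k * (of_int a / of_int b)"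
    unfolding vd_def Zp_def by blast
  then show "rat_cong x y p k" unfolding rat_cong_def
    by (intro exI[of _ a] exI[of _ b]) auto
qed

end


context fixes p :: nat assumes pp: "prime p" begin

lemma dvd_choose_mp: assumes "0 < i" "i < p" shows "p dvd (M * p choose i)"
proof -
  have "i * (M * p choose i) = M * p * ((M * p - 1) choose (i - 1))"
    using times_binomial_minus1_eq[OF assms(1)] by simp
  then have "p dvd i * (M * p choose i)" by simp
  moreover have "\<not> p dvd i" using assms by (auto dest: dvd_imp_le)
  ultimately show ?thesis using pp by (simp add: prime_dvd_mult_iff)
qed

lemma choose_mp_minus1: assumes "0 < M" "j < p"
  shows "int p dvd int ((M * p - 1) choose j) - (-1) ^ j"
  using assms(2)
proof (induction j)
  case 0 then show ?case by simp
next
  case (Suc j)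
  have Mp: "M * p = Suc (M * p - 1)" using assms(1) pp prime_gt_0_nat by (simp add: Suc_pred)
  have pas: "(M * p choose Suc j) = ((M * p - 1) choose j) + ((M * p - 1) choose Suc j)"
    by (subst Mp) simp
  have "p dvd (M * p choose Suc j)" using dvd_choose_mp[of "Suc j" M] Suc by simp
  then have d1: "int p dvd int (M * p choose Suc j)" by simp
  have d2: "int p dvd int ((M * p - 1) choose j) - (-1) ^ j" using Suc by simp
  have "int ((M * p - 1) choose Suc j) - (-1) ^ Suc j
     = int (M * p choose Suc j) - (int ((M * p - 1) choose j) - (-1) ^ j)"
    using pas by simp
  from this dvd_diff[OF d1 d2] show ?case by (simp only:)
qed

lemma choose_mp_cong: assumes "0 < i" "i < p"
  shows "int (p ^ 2) dvd int (M * p choose i) - int M * int (p choose i)"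
proof (cases "M = 0")
  case True then show ?thesis using assms by (cases i) auto
next
  case False
  have e1: "i * (M * p choose i) = M * p * ((M * p - 1) choose (i - 1))"
    using times_binomial_minus1_eq[OF assms(1)] by simp
  have e2: "i * (p choose i) = p * ((p - 1) choose (i - 1))"
    using times_binomial_minus1_eq[OF assms(1)] by simp
  have A: "int p dvd int ((M * p - 1) choose (i - 1)) - (-1) ^ (i - 1)"
    using choose_mp_minus1[of M "i - 1"] False assms by simp
  have B: "int p dvd int ((1 * p - 1) choose (i - 1)) - (-1) ^ (i - 1)"
    using choose_mp_minus1[of 1 "i - 1"] assms by simp
  have "int p dvd int ((M * p - 1) choose (i - 1)) - int ((p - 1) choose (i - 1))"
    using dvd_diff[OF A B] by simp
  then obtain c where c: "int ((M * p - 1) choose (i - 1)) - int ((p - 1) choose (i - 1)) = int p * c"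
    by (elim dvdE)
  have e1': "int i * int (M * p choose i) = int M * int p * int ((M * p - 1) choose (i - 1))"
    using arg_cong[OF e1, of int] by simp
  have e2': "int i * int (p choose i) = int p * int ((p - 1) choose (i - 1))"
    using arg_cong[OF e2, of int] by simp
  have "int i * (int (M * p choose i) - int M * int (p choose i))
      = int i * int (M * p choose i) - int M * (int i * int (p choose i))"
    by (simp add: right_diff_distrib)
  also have "\<dots> = int M * int p * (int ((M * p - 1) choose (i - 1)) - int ((p - 1) choose (i - 1)))"
    unfolding e1' e2' by (simp add: right_diff_distrib)
  also have "\<dots> = int (p ^ 2) * (int M * c)" using c by (simp add: power2_eq_square)
  finally have "int (p ^ 2) dvd int i * (int (M * p choose i) - int M * int (p choose i))" by simp
  moreover have "coprime (int (p ^ 2)) (int i)"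
  proof -
    have "\<not> p dvd i" using assms by (auto dest: dvd_imp_le)
    then have "coprime p i" using pp by (simp add: prime_imp_coprime)
    then show ?thesis by simp
  qed
  ultimately show ?thesis using coprime_dvd_mult_right_iff by blast
qed

lemma newton_coeffs:
  fixes e :: "nat \<Rightarrow> rat" and g :: "nat \<Rightarrow> rat"
  assumes g: "\<And>M. g M = (\<Sum>i\<le>N. of_nat (M choose i) * e i)"
    and h: "\<And>M. M \<le> N \<Longrightarrow> vd p k (g M)"
  shows "i \<le> N \<Longrightarrow> vd p k (e i)"
proof (induction i rule: less_induct)
  case (less i)
  have "g i = (\<Sum>j\<le>i. of_nat (i choose j) * e j)"
    unfolding g by (rule sum.mono_neutral_right) (use less in auto)
  also have "\<dots> = (\<Sum>j<i. of_nat (i choose j) * e j) + e i"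
    by (simp add: lessThan_Suc_atMost[symmetric])
  finally have "e i = g i - (\<Sum>j<i. of_nat (i choose j) * e j)" by simp
  moreover have "vd p k (\<Sum>j<i. of_nat (i choose j) * e j)"
    using less by (intro vd_sum[OF pp] vd_multZ[OF pp]) (auto simp: Zp_of_nat[OF pp])
  ultimately show ?case using h less by (auto intro!: vd_diff[OF pp])
qed

lemma newton_lift:
  fixes e :: "nat \<Rightarrow> rat" and g :: "nat \<Rightarrow> rat"
  assumes g: "\<And>M. g M = (\<Sum>i\<le>N. of_nat (M choose i) * e i)"
    and Np: "N < p"
    and h0: "vd p (Suc k) (g 0)"
    and h: "\<And>M. M \<le> N \<Longrightarrow> vd p k (g M)"
  shows "vd p (Suc k) (g (M * p))"
proof -
  have ek: "\<And>i. i \<le> N \<Longrightarrow> vd p k (e i)" using newton_coeffs[OF g h] by blast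
  have e0: "e 0 = g 0" using g[of 0] by (simp add: atMost_atLeast0 sum.atLeast_Suc_atMost binomial_eq_0)
  have "g (M * p) = (\<Sum>i\<in>insert 0 {1..N}. of_nat (M * p choose i) * e i)"
    unfolding g by (rule sum.cong) auto
  also have "\<dots> = e 0 + (\<Sum>i\<in>{1..N}. of_nat (M * p choose i) * e i)" by simp
  finally have eq: "g (M * p) = e 0 + (\<Sum>i\<in>{1..N}. of_nat (M * p choose i) * e i)" .
  have "vd p (Suc k) (of_nat (M * p choose i) * e i)" if "i \<in> {1..N}" for i
  proof -
    have "vd p 1 (of_nat (M * p choose i))"
      using vd_nat[OF pp, of 1] dvd_choose_mp[of i M] that Np by auto
    moreover have "vd p k (e i)" using ek that by simp
    ultimately show ?thesis using vd_mult[OF pp, of 1 _ k] by simp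
  qed
  then have "vd p (Suc k) (\<Sum>i\<in>{1..N}. of_nat (M * p choose i) * e i)"
    by (intro vd_sum[OF pp]) blast
  moreover have "vd p (Suc k) (e 0)" using h0 e0 by simp
  ultimately show ?thesis unfolding eq by (intro vd_add[OF pp])
qed

lemma newton_base:
  fixes e :: "nat \<Rightarrow> rat" and g :: "nat \<Rightarrow> rat"
  assumes g: "\<And>M. g M = (\<Sum>i\<le>N. of_nat (M choose i) * e i)"
    and Np: "N < p" and g0: "g 0 = 0" and eZ: "\<And>i. e i \<in> Zp p"
  shows "vd p 2 (g (M * p) - of_nat M * g p)"
proof -
  have e0: "e 0 = 0" using g[of 0] g0 by (simp add: atMost_atLeast0 sum.atLeast_Suc_atMost binomial_eq_0)
  have sp: "\<And>X. g X = (\<Sum>i\<in>{1..N}. of_nat (X choose i) * e i)"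
  proof -
    fix X
    have "g X = (\<Sum>i\<in>insert 0 {1..N}. of_nat (X choose i) * e i)"
      unfolding g by (rule sum.cong) auto
    then show "g X = (\<Sum>i\<in>{1..N}. of_nat (X choose i) * e i)" using e0 by simp
  qed
  have "g (M * p) - of_nat M * g p = (\<Sum>i\<in>{1..N}. (of_nat (M * p choose i) - of_nat M * of_nat (p choose i)) * e i)"
    unfolding sp[of "M*p"] sp[of p] sum_distrib_left sum_subtractf[symmetric]
    by (rule sum.cong) (simp_all add: left_diff_distrib mult.assoc)
  also have "vd p 2 \<dots>"
  proof (rule vd_sum[OF pp])
    fix i assume i: "i \<in> {1..N}"
    have "vd p 2 (of_int (int (M * p choose i) - int M * int (p choose i)))"
    proof (rule vd_int[OF pp])
      show "int p ^ 2 dvd int (M * p choose i) - int M * int (p choose i)"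
        using choose_mp_cong[of i M] i Np by simp
    qed
    moreover have "(of_int (int (M * p choose i) - int M * int (p choose i)) :: rat) = of_nat (M * p choose i) - of_nat M * of_nat (p choose i)"
      by simp
    ultimately have "vd p 2 (of_nat (M * p choose i) - of_nat M * of_nat (p choose i))" by simp
    then show "vd p 2 ((of_nat (M * p choose i) - of_nat M * of_nat (p choose i)) * e i)"
      using vd_multZ'[OF pp eZ] by simp
  qed
  finally show ?thesis .
qed

end


definition Kset :: "nat \<Rightarrow> nat \<Rightarrow> (nat \<Rightarrow> nat) set" where
  "Kset n j = {k. (\<forall>i\<ge>n. k i = 0) \<and> (\<Sum>i<n. k i) = j}"

lemma finite_bfun: "finite {f :: nat \<Rightarrow> nat. (\<forall>i<n. f i \<le> B) \<and> (\<forall>i\<ge>n. f i = 0)}"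
proof -
  have "{f :: nat \<Rightarrow> nat. (\<forall>i<n. f i \<le> B) \<and> (\<forall>i\<ge>n. f i = 0)}
        \<subseteq> (\<lambda>f i. if i < n then f i else 0) ` (PiE {..<n} (\<lambda>_. {..B}))"
  proof
    fix f :: "nat \<Rightarrow> nat" assume f: "f \<in> {f. (\<forall>i<n. f i \<le> B) \<and> (\<forall>i\<ge>n. f i = 0)}"
    show "f \<in> (\<lambda>f i. if i < n then f i else 0) ` (PiE {..<n} (\<lambda>_. {..B}))"
      by (rule image_eqI[of _ _ "restrict f {..<n}"]) (use f in \<open>auto simp: fun_eq_iff\<close>)
  qed
  moreover have "finite (PiE {..<n} (\<lambda>_. {..B::nat}))" by (rule finite_PiE) auto
  ultimately show ?thesis using finite_subset by blast
qed

lemma finite_Kset: "finite (Kset n j)"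
proof -
  have "Kset n j \<subseteq> {f. (\<forall>i<n. f i \<le> j) \<and> (\<forall>i\<ge>n. f i = 0)}"
  proof (safe)
    fix f i assume "f \<in> Kset n j" "i < n"
    then show "f i \<le> j" unfolding Kset_def
      using member_le_sum[of i "{..<n}" f] by auto
  next
    fix f i assume "f \<in> Kset n j" "n \<le> i" then show "f i = 0" unfolding Kset_def by auto
  qed
  then show ?thesis using finite_bfun finite_subset by blast
qed

lemma Kset_Suc_bij:
  "bij_betw (\<lambda>k. (k n, k(n := 0))) (Kset (Suc n) j) (SIGMA t:{..j}. Kset n (j - t))"
proof (rule bij_betwI[where g = "\<lambda>(t, k). k(n := t)"])
  show "(\<lambda>k. (k n, k(n := 0))) \<in> Kset (Suc n) j \<rightarrow> (SIGMA t:{..j}. Kset n (j - t))"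
  proof
    fix k assume k: "k \<in> Kset (Suc n) j"
    then have s: "(\<Sum>i<n. k i) + k n = j" and z: "\<forall>i\<ge>Suc n. k i = 0" unfolding Kset_def by auto
    have "(\<Sum>i<n. (k(n := 0)) i) = (\<Sum>i<n. k i)" by (rule sum.cong) auto
    moreover have "\<forall>i\<ge>n. (k(n := 0)) i = 0" using z by auto
    ultimately have "k(n := 0) \<in> Kset n (j - k n)" using s unfolding Kset_def by auto
    moreover have "k n \<le> j" using s by auto
    ultimately show "(k n, k(n := 0)) \<in> (SIGMA t:{..j}. Kset n (j - t))" by auto
  qed
  show "(\<lambda>(t, k). k(n := t)) \<in> (SIGMA t:{..j}. Kset n (j - t)) \<rightarrow> Kset (Suc n) j"
  proof
    fix tk assume tk: "tk \<in> (SIGMA t:{..j}. Kset n (j - t))"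
    then obtain t k where tk': "tk = (t, k)" "t \<le> j" "k \<in> Kset n (j - t)" by auto
    then have s: "(\<Sum>i<n. k i) = j - t" and z: "\<forall>i\<ge>n. k i = 0" unfolding Kset_def by auto
    have "(\<Sum>i<n. (k(n := t)) i) = (\<Sum>i<n. k i)" by (rule sum.cong) auto
    then show "(\<lambda>(t, k). k(n := t)) tk \<in> Kset (Suc n) j"
      using s z tk' unfolding Kset_def by auto
  qed
  show "(\<lambda>(t, k). k(n := t)) (k n, k(n := 0)) = k" if "k \<in> Kset (Suc n) j" for k by auto
  show "(\<lambda>k. (k n, k(n := 0))) ((\<lambda>(t, k). k(n := t)) tk) = tk"
    if tkm: "tk \<in> (SIGMA t:{..j}. Kset n (j - t))" for tk
  proof -
    obtain t k where tk: "tk = (t, k)" "k \<in> Kset n (j - t)" using tkm by (cases tk) auto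
    then have "k n = 0" unfolding Kset_def by auto
    then have "(k(n := t))(n := 0) = k" by (auto simp: fun_eq_iff)
    then show ?thesis using tk by simp
  qed
qed

lemma choose_sym_add: "(a + b) choose a = (a + b) choose (b::nat)"
  using binomial_symmetric[of a "a + b"] by simp

lemma card_Kset: "card (Kset (Suc n) j) = (j + n) choose n"
proof (induction n arbitrary: j)
  case 0
  have "Kset (Suc 0) j = {\<lambda>i. if i = 0 then j else 0}"
    unfolding Kset_def by (auto simp: fun_eq_iff)
  then show ?case by simp
next
  case (Suc n)
  have "card (Kset (Suc (Suc n)) j) = card (SIGMA t:{..j}. Kset (Suc n) (j - t))"
    using bij_betw_same_card[OF Kset_Suc_bij] .
  also have "\<dots> = (\<Sum>t\<le>j. card (Kset (Suc n) (j - t)))"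
    by (rule card_SigmaI) (auto simp: finite_Kset)
  also have "\<dots> = (\<Sum>t\<le>j. (j - t + n) choose n)" using Suc by simp
  also have "\<dots> = (\<Sum>t\<le>j. (n + t) choose t)"
  proof -
    have "(\<Sum>t\<le>j. (j - t + n) choose n) = (\<Sum>t\<le>j. (j - (j - t) + n) choose n)"
      by (rule sum.reindex_bij_witness[where i = "\<lambda>t. j - t" and j = "\<lambda>t. j - t"]) auto
    also have "\<dots> = (\<Sum>t\<le>j. (n + t) choose t)"
    proof (rule sum.cong)
      fix t assume "t \<in> {..j}"
      then have "j - (j - t) + n = t + n" by simp
      then show "(j - (j - t) + n) choose n = (n + t) choose t"
        using choose_sym_add[of t n] by (simp add: add.commute)
    qed simp
    finally show ?thesis .
  qed
  also have "\<dots> = Suc (n + j) choose j" by (rule sum_choose_lower)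
  also have "\<dots> = (j + Suc n) choose Suc n"
    by (metis add_Suc_right add.commute choose_sym_add)
  finally show ?case .
qed

definition swp :: "nat \<Rightarrow> nat \<Rightarrow> nat" where
  "swp i x = (if x = i then 0 else if x = 0 then i else x)"

lemma swp_inv[simp]: "swp i (swp i x) = x" unfolding swp_def by auto

lemma swp_lt: "i < n \<Longrightarrow> x < n \<Longrightarrow> swp i x < n" unfolding swp_def by auto
lemma swp_ge: "i < n \<Longrightarrow> n \<le> x \<Longrightarrow> swp i x = x" unfolding swp_def by auto

lemma sum_Kset_coord: assumes "i < n" shows "(\<Sum>k\<in>Kset n j. k i) = (\<Sum>k\<in>Kset n j. k 0)"
proof -
  have sw: "(\<Sum>x<n. k (swp i x)) = (\<Sum>x<n. k x)" for k :: "nat \<Rightarrow> nat"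
  proof (rule sum.reindex_bij_witness[where i = "swp i" and j = "swp i"])
  qed (simp_all add: swp_lt[OF assms])
  have mem: "k \<circ> swp i \<in> Kset n j" if "k \<in> Kset n j" for k
  proof -
    have "\<forall>x\<ge>n. (k \<circ> swp i) x = 0" using that swp_ge[OF assms] unfolding Kset_def by simp
    moreover have "(\<Sum>x<n. (k \<circ> swp i) x) = j" using sw[of k] that unfolding Kset_def by simp
    ultimately show ?thesis unfolding Kset_def by blast
  qed
  have inv: "(k \<circ> swp i) \<circ> swp i = k" for k :: "nat \<Rightarrow> nat" by (simp add: fun_eq_iff)
  have "bij_betw (\<lambda>k. k \<circ> swp i) (Kset n j) (Kset n j)"
    by (rule bij_betwI[where g = "\<lambda>k. k \<circ> swp i"]) (simp_all add: mem inv)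
  from sum.reindex_bij_betw[OF this, of "\<lambda>k. k 0"]
  have "(\<Sum>k\<in>Kset n j. k (swp i 0)) = (\<Sum>k\<in>Kset n j. k 0)" by simp
  moreover have "swp i 0 = i" by (simp add: swp_def)
  ultimately show ?thesis by simp
qed

lemma sum_Kset: assumes "i \<le> n" shows "(\<Sum>k\<in>Kset (Suc n) j. k i) = (j + n) choose (Suc n)"
proof -
  have "(\<Sum>i'<Suc n. \<Sum>k\<in>Kset (Suc n) j. k i') = (\<Sum>i'<Suc n. \<Sum>k\<in>Kset (Suc n) j. k 0)"
    by (rule sum.cong[OF refl], rule sum_Kset_coord) simp
  then have "Suc n * (\<Sum>k\<in>Kset (Suc n) j. k 0) = (\<Sum>i'<Suc n. \<Sum>k\<in>Kset (Suc n) j. k i')"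
    by simp
  also have "\<dots> = (\<Sum>k\<in>Kset (Suc n) j. \<Sum>i'<Suc n. k i')" by (rule sum.swap)
  also have "\<dots> = (\<Sum>k\<in>Kset (Suc n) j. j)" by (rule sum.cong) (auto simp: Kset_def)
  also have "\<dots> = j * ((j + n) choose n)" using card_Kset by simp
  also have "\<dots> = (j + n) * ((j + n - 1) choose n)"
    using binomial_absorb_comp[of "j + n" n] by simp
  also have "\<dots> = Suc n * ((j + n) choose Suc n)"
    using binomial_absorption[of n "j + n"] by simp
  finally have "Suc n * (\<Sum>k\<in>Kset (Suc n) j. k 0) = Suc n * ((j + n) choose (Suc n))" .
  then have "(\<Sum>k\<in>Kset (Suc n) j. k 0) = (j + n) choose (Suc n)"
    by (metis Suc_neq_Zero mult_left_cancel)
  moreover have "(\<Sum>k\<in>Kset (Suc n) j. k i) = (\<Sum>k\<in>Kset (Suc n) j. k 0)"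
    using sum_Kset_coord[of i "Suc n" j] assms by simp
  ultimately show ?thesis by simp
qed


definition Xs :: "nat \<Rightarrow> nat \<Rightarrow> nat \<Rightarrow> nat \<Rightarrow> (nat \<Rightarrow> nat) set" where
  "Xs p n s a = {x \<in> tuplesR p n (a * p ^ s). \<forall>i<n. x i < p ^ s}"

definition KK :: "nat \<Rightarrow> nat \<Rightarrow> nat \<Rightarrow> (nat \<Rightarrow> nat) set" where
  "KK n a M = {k. (\<forall>i\<ge>n. k i = 0) \<and> a + (\<Sum>i<n. k i) = M}"

lemma finite_Xs: "finite (Xs p n s a)"
proof -
  have "Xs p n s a \<subseteq> {f. (\<forall>i<n. f i \<le> p ^ s) \<and> (\<forall>i\<ge>n. f i = 0)}"
    unfolding Xs_def tuplesR_def by auto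
  then show ?thesis using finite_bfun finite_subset by blast
qed

lemma finite_KK: "finite (KK n a M)"
proof -
  have "KK n a M \<subseteq> {f. (\<forall>i<n. f i \<le> M) \<and> (\<forall>i\<ge>n. f i = 0)}"
  proof safe
    fix f i assume "f \<in> KK n a M" "i < n"
    then show "f i \<le> M" unfolding KK_def using member_le_sum[of i "{..<n}" f] by auto
  qed (auto simp: KK_def)
  then show ?thesis using finite_bfun finite_subset by blast
qed

lemma KK_eq: "KK n a M = (if a \<le> M then Kset n (M - a) else {})"
  unfolding KK_def Kset_def by auto

context fixes p :: nat assumes pp: "prime p" begin

lemma decomp:
  fixes f :: "(nat \<Rightarrow> nat) \<Rightarrow> rat"
  assumes s: "0 < s" and npos: "0 < n"
  shows "(\<Sum>l\<in>tuplesR p n (M * p ^ s). f l)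
       = (\<Sum>a\<in>{1..n-1}. \<Sum>x\<in>Xs p n s a. \<Sum>k\<in>KK n a M. f (\<lambda>i. x i + p ^ s * k i))"
proof -
  define q where "q = p ^ s"
  have q1: "1 < q" unfolding q_def using s prime_gt_1_nat[OF pp] by (metis one_less_power)
  have pq: "p dvd q" unfolding q_def using s by (simp add: dvd_power)
  define D where "D = (SIGMA a:{1..n-1}. SIGMA x:Xs p n s a. KK n a M)"
  define h where "h = (\<lambda>(a::nat, x::nat \<Rightarrow> nat, k::nat \<Rightarrow> nat). (\<lambda>i. x i + q * k i))"
  have "(\<Sum>a\<in>{1..n-1}. \<Sum>x\<in>Xs p n s a. \<Sum>k\<in>KK n a M. f (\<lambda>i. x i + q * k i))
      = (\<Sum>a\<in>{1..n-1}. \<Sum>xk\<in>(SIGMA x:Xs p n s a. KK n a M). f (h (a, xk)))"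
    by (rule sum.cong[OF refl], subst sum.Sigma) (auto simp: finite_Xs finite_KK h_def intro!: sum.cong split: prod.splits)
  also have "\<dots> = (\<Sum>axk\<in>D. f (h axk))"
    unfolding D_def by (subst sum.Sigma) (auto simp: finite_Xs finite_KK intro!: finite_SigmaI)
  also have "\<dots> = (\<Sum>l\<in>tuplesR p n (M * q). f l)"
  proof (rule sum.reindex_bij_betw)
    show "bij_betw h D (tuplesR p n (M * q))"
    proof (rule bij_betw_imageI)
      show "inj_on h D"
      proof (rule inj_onI)
        fix u v assume u: "u \<in> D" and v: "v \<in> D" and huv: "h u = h v"
        obtain a x k where u': "u = (a, x, k)" by (cases u) auto
        obtain b y m where v': "v = (b, y, m)" by (cases v) auto
        have xa: "x \<in> Xs p n s a" "k \<in> KK n a M" using u u' unfolding D_def by auto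
        have yb: "y \<in> Xs p n s b" "m \<in> KK n b M" using v v' unfolding D_def by auto
        have xlt: "x i < q" for i
          using xa(1) q1 unfolding Xs_def tuplesR_def q_def by (cases "i < n") (auto simp: prime_gt_0_nat[OF pp])
        have ylt: "y i < q" for i
          using yb(1) q1 unfolding Xs_def tuplesR_def q_def by (cases "i < n") (auto simp: prime_gt_0_nat[OF pp])
        have eq: "x i + q * k i = y i + q * m i" for i
          using huv u' v' unfolding h_def by (auto dest: fun_cong[of _ _ i])
        have xy: "x i = y i" for i
        proof -
          have "(x i + q * k i) mod q = (y i + q * m i) mod q" using eq[of i] by simp
          then show ?thesis using xlt[of i] ylt[of i] by simp
        qed
        have km: "k i = m i" for i
        proof -
          have "(x i + q * k i) div q = (y i + q * m i) div q" using eq[of i] by simp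
          then show ?thesis using xlt[of i] ylt[of i] q1 by simp
        qed
        have "a * q = b * q"
          using xa(1) yb(1) xy unfolding Xs_def tuplesR_def q_def by auto
        then have "a = b" using q1 by simp
        then show "u = v" using u' v' xy km by (auto simp: fun_eq_iff)
      qed
      show "h ` D = tuplesR p n (M * q)"
      proof
        show "h ` D \<subseteq> tuplesR p n (M * q)"
        proof
          fix l assume "l \<in> h ` D"
          then obtain a x k where axk: "a \<in> {1..n-1}" "x \<in> Xs p n s a" "k \<in> KK n a M"
            and l: "l = (\<lambda>i. x i + q * k i)" unfolding D_def h_def by auto
          have xs: "\<forall>i<n. x i \<in> coprimeP p" "\<forall>i\<ge>n. x i = 0" "(\<Sum>i<n. x i) = a * q"
            using axk(2) unfolding Xs_def tuplesR_def q_def by auto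
          have ks: "\<forall>i\<ge>n. k i = 0" "a + (\<Sum>i<n. k i) = M" using axk(3) unfolding KK_def by auto
          have c: "l i \<in> coprimeP p" if "i < n" for i
          proof -
            have "0 < x i" "\<not> p dvd x i" using xs(1) that unfolding coprimeP_def by auto
            moreover have "p dvd q * k i" using pq by simp
            ultimately show ?thesis unfolding coprimeP_def l
              by (auto simp: dvd_add_left_iff)
          qed
          have "(\<Sum>i<n. l i) = (\<Sum>i<n. x i) + q * (\<Sum>i<n. k i)"
            unfolding l by (simp add: sum.distrib sum_distrib_left)
          also have "\<dots> = M * q" using xs(3) ks(2) by (metis add_mult_distrib mult.commute)
          finally show "l \<in> tuplesR p n (M * q)"
            unfolding tuplesR_def using c xs(2) ks(1) l by auto
        qed
      next
        show "tuplesR p n (M * q) \<subseteq> h ` D"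
        proof
          fix l assume l: "l \<in> tuplesR p n (M * q)"
          define x where "x = (\<lambda>i. l i mod q)"
          define k where "k = (\<lambda>i. l i div q)"
          have lxk: "l = (\<lambda>i. x i + q * k i)" unfolding x_def k_def by (auto simp: fun_eq_iff)
          have ls: "\<forall>i<n. l i \<in> coprimeP p" "\<forall>i\<ge>n. l i = 0" "(\<Sum>i<n. l i) = M * q"
            using l unfolding tuplesR_def by auto
          have xc: "x i \<in> coprimeP p" if "i < n" for i
          proof -
            have nd: "\<not> p dvd l i" using ls(1) that unfolding coprimeP_def by auto
            have "\<not> p dvd x i"
            proof
              assume "p dvd x i"
              moreover have "p dvd q * k i" using pq by simp
              ultimately have "p dvd l i" using lxk by (metis dvd_add)
              then show False using nd by simp
            qed
            moreover then have "0 < x i" by (metis dvd_0_right gr0I)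
            ultimately show ?thesis unfolding coprimeP_def by auto
          qed
          have xlt: "x i < q" for i unfolding x_def using q1 by simp
          have x0: "\<forall>i\<ge>n. x i = 0" "\<forall>i\<ge>n. k i = 0" using ls(2) unfolding x_def k_def by auto
          have sumeq: "(\<Sum>i<n. x i) + q * (\<Sum>i<n. k i) = M * q"
            using ls(3) unfolding lxk by (simp add: sum.distrib sum_distrib_left)
          define a where "a = M - (\<Sum>i<n. k i)"
          have kle: "(\<Sum>i<n. k i) \<le> M"
          proof -
            have "q * (\<Sum>i<n. k i) \<le> q * M" using sumeq by (metis le_add2 mult.commute)
            then show ?thesis using q1 by simp
          qed
          have xsum: "(\<Sum>i<n. x i) = a * q"
            using sumeq unfolding a_def by (metis add_diff_cancel_right' diff_mult_distrib mult.commute)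
          have a1: "1 \<le> a"
          proof -
            have "x 0 \<le> (\<Sum>i<n. x i)" using npos by (intro member_le_sum) auto
            moreover have "0 < x 0" using xc[of 0] npos unfolding coprimeP_def by auto
            ultimately have "0 < a * q" using xsum by linarith
            then show ?thesis by (simp add: Suc_le_eq)
          qed
          have an: "a \<le> n - 1"
          proof -
            have "(\<Sum>i<n. x i) \<le> (\<Sum>i<n. q - 1)" by (intro sum_mono) (metis Suc_pred' less_Suc_eq_le q1 xlt zero_less_one order.strict_trans)
            also have "\<dots> = n * (q - 1)" by simp
            also have "\<dots> < n * q" using npos q1 by simp
            finally have "a * q < n * q" using xsum by simp
            then show ?thesis by auto
          qed
          have xX: "x \<in> Xs p n s a"
            unfolding Xs_def tuplesR_def using xc x0 xsum xlt unfolding q_def by auto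
          have kK: "k \<in> KK n a M" unfolding KK_def using x0 kle unfolding a_def by auto
          show "l \<in> h ` D"
            by (rule image_eqI[of _ _ "(a, x, k)"]) (use lxk a1 an xX kK in \<open>auto simp: h_def D_def\<close>)
        qed
      qed
    qed
  qed
  finally show ?thesis unfolding q_def ..
qed

end


definition wt :: "nat \<Rightarrow> (nat \<Rightarrow> nat) \<Rightarrow> rat" where
  "wt n l = 1 / (\<Prod>i<n. of_nat (l i))"

context fixes p :: nat assumes pp: "prime p" begin

lemma approx_prod:
  fixes x k :: "nat \<Rightarrow> nat" and q :: nat
  assumes I: "finite I" and xi: "\<And>i. i \<in> I \<Longrightarrow> 0 < x i \<and> \<not> p dvd x i" and pq: "p dvd q"
  shows "\<exists>E\<in>Zp p. (\<Prod>i\<in>I. 1 / of_nat (x i + q * k i))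
     - (\<Prod>i\<in>I. 1 / of_nat (x i)) * (1 - of_nat q * (\<Sum>i\<in>I. of_nat (k i) / of_nat (x i))) = of_nat q ^ 2 * E"
  using I xi
proof (induction I rule: finite_induct)
  case empty then show ?case by (intro bexI[of _ 0]) (auto simp: Zp_0[OF pp])
next
  case (insert j I)
  then obtain E where E: "E \<in> Zp p" and
    hE: "(\<Prod>i\<in>I. 1 / of_nat (x i + q * k i))
     - (\<Prod>i\<in>I. 1 / of_nat (x i)) * (1 - of_nat q * (\<Sum>i\<in>I. of_nat (k i) / of_nat (x i))) = of_nat q ^ 2 * E"
    by auto
  define U where "U = (\<Prod>i\<in>I. 1 / (of_nat (x i + q * k i) :: rat))"
  define V where "V = (\<Prod>i\<in>I. 1 / (of_nat (x i) :: rat))"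
  define B where "B = (\<Sum>i\<in>I. of_nat (k i) / (of_nat (x i) :: rat))"
  define u where "u = 1 / (of_nat (x j + q * k j) :: rat)"
  define v where "v = 1 / (of_nat (x j) :: rat)"
  define Q where "Q = (of_nat q :: rat)"
  define K where "K = (of_nat (k j) :: rat)"
  have xj: "0 < x j" "\<not> p dvd x j" using insert by auto
  have nd: "\<not> p dvd (x j + q * k j)"
  proof
    assume "p dvd x j + q * k j"
    moreover have "p dvd q * k j" using pq by simp
    ultimately have "p dvd x j" using dvd_add_left_iff by blast
    then show False using xj by simp
  qed
  have uZ: "u \<in> Zp p" unfolding u_def using nd by (rule Zp_inv_nat[OF pp])
  have vZ: "v \<in> Zp p" unfolding v_def using xj by (intro Zp_inv_nat[OF pp]) simp
  have VZ: "V \<in> Zp p" unfolding V_def using insert by (intro Zp_prod[OF pp] Zp_inv_nat[OF pp]) auto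
  have BZ: "B \<in> Zp p" unfolding B_def
  proof (intro Zp_sum[OF pp])
    fix i assume "i \<in> I"
    then have "1 / (of_nat (x i) :: rat) \<in> Zp p" using insert by (intro Zp_inv_nat[OF pp]) auto
    then have "of_nat (k i) * (1 / (of_nat (x i) :: rat)) \<in> Zp p" by (intro Zp_mult[OF pp]) (auto simp: Zp_of_nat[OF pp])
    then show "of_nat (k i) / (of_nat (x i) :: rat) \<in> Zp p" by simp
  qed
  have hu: "u - v = - Q * K * v ^ 2 + Q ^ 2 * K ^ 2 * v ^ 2 * u"
  proof -
    define X where "X = (of_nat (x j) :: rat)"
    have X0: "X \<noteq> 0" using xj unfolding X_def by simp
    have Y0: "X + Q * K \<noteq> 0" unfolding X_def Q_def K_def using xj
      by (metis add_gr_0 of_nat_0_less_iff of_nat_add of_nat_mult order_less_irrefl)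
    have uu: "u = 1 / (X + Q * K)" unfolding u_def X_def Q_def K_def by simp
    have vv: "v = 1 / X" unfolding v_def X_def by simp
    define Y where "Y = X + Q * K"
    have QK: "Q * K = Y - X" unfolding Y_def by simp
    have Y0': "Y \<noteq> 0" using Y0 unfolding Y_def .
    have "1 / Y - 1 / X = - (Y - X) * (1 / X) ^ 2 + (Y - X) ^ 2 * (1 / X) ^ 2 * (1 / Y)"
      using X0 Y0' by (simp add: field_simps power2_eq_square)
    then show ?thesis unfolding uu vv Y_def[symmetric]
      by (simp add: QK power_mult_distrib[symmetric] mult.assoc[symmetric] mult.commute[of K Q])
  qed
  have hE': "U = V * (1 - Q * B) + Q ^ 2 * E" using hE unfolding U_def V_def B_def Q_def by simp
  have LHS: "(\<Prod>i\<in>insert j I. 1 / of_nat (x i + q * k i))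
     - (\<Prod>i\<in>insert j I. 1 / of_nat (x i)) * (1 - of_nat q * (\<Sum>i\<in>insert j I. of_nat (k i) / of_nat (x i)))
     = u * U - v * V * (1 - Q * (B + K * v))"
    using insert unfolding U_def V_def B_def u_def v_def Q_def K_def by (simp add: divide_inverse)
  also have "\<dots> = (u - v) * (V * (1 - Q * B)) + Q ^ 2 * u * E + Q * K * v ^ 2 * V"
    unfolding hE' by (simp add: algebra_simps power2_eq_square)
  also have "\<dots> = Q ^ 2 * (K * v ^ 2 * V * B + K ^ 2 * v ^ 2 * u * V * (1 - Q * B) + u * E)"
    unfolding hu by (simp add: algebra_simps power2_eq_square)
  finally show ?case
  proof (intro bexI)
    show "K * v ^ 2 * V * B + K ^ 2 * v ^ 2 * u * V * (1 - Q * B) + u * E \<in> Zp p"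
      using uZ vZ VZ BZ E unfolding K_def Q_def
      by (intro Zp_add[OF pp] Zp_mult[OF pp] Zp_pow[OF pp] Zp_diff[OF pp] Zp_of_nat[OF pp] Zp_1[OF pp]) auto
  qed (simp add: Q_def)
qed

lemma wt_eq: "wt n l = (\<Prod>i<n. 1 / of_nat (l i))"
  unfolding wt_def by (simp add: prod_dividef)

lemma approx_w:
  assumes x: "\<forall>i<n. x i \<in> coprimeP p" and s: "0 < s"
  shows "vd p (2 * s) (wt n (\<lambda>i. x i + p ^ s * k i)
     - wt n x * (1 - of_nat (p ^ s) * (\<Sum>i<n. of_nat (k i) / of_nat (x i))))"
proof -
  have "\<exists>E\<in>Zp p. (\<Prod>i<n. 1 / of_nat (x i + p ^ s * k i))
     - (\<Prod>i<n. 1 / of_nat (x i)) * (1 - of_nat (p ^ s) * (\<Sum>i<n. of_nat (k i) / of_nat (x i))) = of_nat (p ^ s) ^ 2 * E"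
    by (rule approx_prod) (use x s in \<open>auto simp: coprimeP_def dvd_power\<close>)
  then show ?thesis unfolding vd_def wt_eq
    by (simp add: power_mult[symmetric] mult.commute[of s 2])
qed

lemma sum_approx:
  assumes x: "\<forall>i<n. x i \<in> coprimeP p" and s: "0 < s" and fin: "finite Kst"
  shows "vd p (2 * s) ((\<Sum>k\<in>Kst. wt n (\<lambda>i. x i + p ^ s * k i))
     - wt n x * (of_nat (card Kst) - of_nat (p ^ s) * (\<Sum>i<n. of_nat (\<Sum>k\<in>Kst. k i) / of_nat (x i))))"
proof -
  have eq: "wt n x * (of_nat (card Kst) - of_nat (p ^ s) * (\<Sum>i<n. of_nat (\<Sum>k\<in>Kst. k i) / of_nat (x i)))
      = (\<Sum>k\<in>Kst. wt n x * (1 - of_nat (p ^ s) * (\<Sum>i<n. of_nat (k i) / of_nat (x i))))"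
  proof -
    have "(\<Sum>i<n. of_nat (\<Sum>k\<in>Kst. k i) / (of_nat (x i) :: rat))
        = (\<Sum>k\<in>Kst. \<Sum>i<n. of_nat (k i) / of_nat (x i))"
      by (simp add: sum_divide_distrib sum.swap[of _ Kst])
    then show ?thesis
      by (simp add: sum_distrib_left sum_subtractf right_diff_distrib)
  qed
  show ?thesis unfolding eq sum_subtractf[symmetric]
    by (intro vd_sum[OF pp] approx_w[OF x s])
qed

lemma card_KK: assumes "1 \<le> a" "a \<le> n - 1"
  shows "card (KK n a M) = (M + (n - 1 - a)) choose (n - 1)"
proof (cases "a \<le> M")
  case True
  obtain n' where n: "n = Suc n'" using assms by (cases n) auto
  show ?thesis using True assms card_Kset[of n' "M - a"] unfolding KK_eq n by simp
next
  case False
  then show ?thesis using assms unfolding KK_eq by (simp add: binomial_eq_0)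
qed

lemma sumk_KK: assumes "1 \<le> a" "a \<le> n - 1" "i < n"
  shows "(\<Sum>k\<in>KK n a M. k i) = (M + (n - 1 - a)) choose n"
proof (cases "a \<le> M")
  case True
  obtain n' where n: "n = Suc n'" using assms by (cases n) auto
  show ?thesis using True assms sum_Kset[of i n' "M - a"] unfolding KK_eq n by simp
next
  case False
  then show ?thesis using assms unfolding KK_eq by (simp add: binomial_eq_0)
qed

end

definition Ta :: "nat \<Rightarrow> nat \<Rightarrow> nat \<Rightarrow> nat \<Rightarrow> rat" where
  "Ta p n s a = (\<Sum>x\<in>Xs p n s a. wt n x * (\<Sum>i<n. 1 / of_nat (x i)))"

definition Hf :: "nat \<Rightarrow> nat \<Rightarrow> nat \<Rightarrow> nat \<Rightarrow> rat" where
  "Hf p n s M = (\<Sum>a\<in>{1..n-1}. of_nat ((M + (n - 1 - a)) choose (n - 1)) * S_sum p n a s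
       - of_nat (p ^ s) * of_nat ((M + (n - 1 - a)) choose n) * Ta p n s a)"

lemma S_sum_Xs: "S_sum p n a s = (\<Sum>x\<in>Xs p n s a. wt n x)"
  unfolding S_sum_def Xs_def wt_def ..

lemma R_sum_wt: "R_sum p n M s = (\<Sum>l\<in>tuplesR p n (M * p ^ s). wt n l)"
  unfolding R_sum_def wt_def ..

context fixes p :: nat assumes pp: "prime p" begin

lemma DEC: assumes s: "0 < s" and n: "0 < n"
  shows "vd p (2 * s) (R_sum p n M s - Hf p n s M)"
proof -
  have "R_sum p n M s - Hf p n s M = (\<Sum>a\<in>{1..n-1}. \<Sum>x\<in>Xs p n s a.
      (\<Sum>k\<in>KK n a M. wt n (\<lambda>i. x i + p ^ s * k i))
     - wt n x * (of_nat (card (KK n a M)) - of_nat (p ^ s) * (\<Sum>i<n. of_nat (\<Sum>k\<in>KK n a M. k i) / of_nat (x i))))"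
    unfolding R_sum_wt decomp[OF pp s n] Hf_def sum_subtractf[symmetric]
  proof (rule sum.cong[OF refl])
    fix a assume a: "a \<in> {1..n-1}"
    have c: "card (KK n a M) = (M + (n - 1 - a)) choose (n - 1)" using card_KK[OF pp] a by auto
    have sk: "\<And>i. i \<in> {..<n} \<Longrightarrow> (\<Sum>k\<in>KK n a M. k i) = (M + (n - 1 - a)) choose n" using sumk_KK[OF pp] a by auto
    show "(\<Sum>x\<in>Xs p n s a. \<Sum>k\<in>KK n a M. wt n (\<lambda>i. x i + p ^ s * k i)) -
         (of_nat (M + (n - 1 - a) choose (n - 1)) * S_sum p n a s -
          of_nat (p ^ s) * of_nat (M + (n - 1 - a) choose n) * Ta p n s a) =
         (\<Sum>x\<in>Xs p n s a. (\<Sum>k\<in>KK n a M. wt n (\<lambda>i. x i + p ^ s * k i)) -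
          wt n x * (of_nat (card (KK n a M)) -
                    of_nat (p ^ s) * (\<Sum>i<n. of_nat (\<Sum>k\<in>KK n a M. k i) / of_nat (x i))))"
    proof -
      define C1 :: rat where "C1 = of_nat (M + (n - 1 - a) choose (n - 1))"
      define C2 :: rat where "C2 = of_nat (M + (n - 1 - a) choose n)"
      define Q :: rat where "Q = of_nat (p ^ s)"
      have inner: "wt n x * (of_nat (card (KK n a M)) - Q * (\<Sum>i<n. of_nat (\<Sum>k\<in>KK n a M. k i) / of_nat (x i)))
          = C1 * wt n x - Q * C2 * (wt n x * (\<Sum>i<n. 1 / of_nat (x i)))" for x :: "nat \<Rightarrow> nat"
      proof -
        have "(\<Sum>i<n. of_nat (\<Sum>k\<in>KK n a M. k i) / (of_nat (x i) :: rat)) = (\<Sum>i<n. C2 * (1 / of_nat (x i)))"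
          by (rule sum.cong[OF refl]) (simp add: sk C2_def)
        also have "\<dots> = C2 * (\<Sum>i<n. 1 / of_nat (x i))" by (simp add: sum_distrib_left)
        finally show ?thesis unfolding c C1_def[symmetric] by (simp add: algebra_simps)
      qed
      show ?thesis unfolding C1_def[symmetric] C2_def[symmetric] Q_def[symmetric] inner
        unfolding S_sum_Xs Ta_def sum_subtractf sum_distrib_left mult.assoc ..
    qed
  qed
  also have "vd p (2 * s) \<dots>"
  proof (intro vd_sum[OF pp])
    fix a x assume a: "a \<in> {1..n-1}" and x: "x \<in> Xs p n s a"
    have "\<forall>i<n. x i \<in> coprimeP p" using x unfolding Xs_def tuplesR_def by auto
    then show "vd p (2 * s) ((\<Sum>k\<in>KK n a M. wt n (\<lambda>i. x i + p ^ s * k i)) -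
          wt n x * (of_nat (card (KK n a M)) -
                    of_nat (p ^ s) * (\<Sum>i<n. of_nat (\<Sum>k\<in>KK n a M. k i) / of_nat (x i))))"
      by (rule sum_approx[OF pp _ s finite_KK])
  qed
  finally show ?thesis .
qed

end


context fixes p :: nat assumes pp: "prime p" begin

lemma wt_Zp: "\<forall>i<n. x i \<in> coprimeP p \<Longrightarrow> wt n x \<in> Zp p"
  unfolding wt_eq[OF pp] by (intro Zp_prod[OF pp] Zp_inv_nat[OF pp]) (auto simp: coprimeP_def)

lemma S_Zp: "S_sum p n a s \<in> Zp p"
  unfolding S_sum_Xs by (intro Zp_sum[OF pp] wt_Zp) (auto simp: Xs_def tuplesR_def)

lemma Ta_Zp: "Ta p n s a \<in> Zp p"
  unfolding Ta_def
proof (intro Zp_sum[OF pp])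
  fix x assume x: "x \<in> Xs p n s a"
  then have c: "\<forall>i<n. x i \<in> coprimeP p" by (auto simp: Xs_def tuplesR_def)
  then have "(\<Sum>i<n. 1 / of_nat (x i)) \<in> Zp p"
    by (intro Zp_sum[OF pp] Zp_inv_nat[OF pp]) (auto simp: coprimeP_def)
  then show "wt n x * (\<Sum>i<n. 1 / of_nat (x i)) \<in> Zp p" using wt_Zp[OF c] Zp_mult[OF pp] by blast
qed

lemma vander_ext: assumes "j \<le> N"
  shows "(of_nat ((M + c) choose j) :: rat)
     = (\<Sum>i\<le>N. of_nat (M choose i) * (if i \<le> j then of_nat (c choose (j - i)) else 0))"
proof -
  have "(\<Sum>i\<le>N. (of_nat (M choose i) :: rat) * (if i \<le> j then of_nat (c choose (j - i)) else 0))
      = (\<Sum>i\<le>j. of_nat (M choose i) * (if i \<le> j then of_nat (c choose (j - i)) else 0))"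
    by (rule sum.mono_neutral_right) (use assms in auto)
  also have "\<dots> = (\<Sum>i\<le>j. of_nat ((M choose i) * (c choose (j - i))))" by simp
  also have "\<dots> = of_nat ((M + c) choose j)" unfolding of_nat_sum[symmetric] vandermonde ..
  finally show ?thesis by simp
qed

lemma newton_Hf: "\<exists>e. (\<forall>i. e i \<in> Zp p) \<and> (\<forall>M. Hf p n s M = (\<Sum>i\<le>n. of_nat (M choose i) * e i))"
proof -
  define g :: "nat \<Rightarrow> nat \<Rightarrow> nat \<Rightarrow> rat" where
    "g c j i = (if i \<le> j then of_nat (c choose (j - i)) else 0)" for c j i
  define e where "e i = (\<Sum>a\<in>{1..n-1}. g (n - 1 - a) (n - 1) i * S_sum p n a s
      - of_nat (p ^ s) * g (n - 1 - a) n i * Ta p n s a)" for i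
  have eZ: "e i \<in> Zp p" for i
    unfolding e_def g_def
    by (intro Zp_sum[OF pp] Zp_diff[OF pp] Zp_mult[OF pp] S_Zp Ta_Zp) (auto simp: Zp_of_nat[OF pp] Zp_0[OF pp] Zp_pow[OF pp])
  have "Hf p n s M = (\<Sum>i\<le>n. of_nat (M choose i) * e i)" for M
  proof -
    have "Hf p n s M = (\<Sum>a\<in>{1..n-1}. (\<Sum>i\<le>n. of_nat (M choose i) * g (n - 1 - a) (n - 1) i) * S_sum p n a s
       - of_nat (p ^ s) * (\<Sum>i\<le>n. of_nat (M choose i) * g (n - 1 - a) n i) * Ta p n s a)"
    proof -
      have v1: "(of_nat ((M + c) choose (n-1)) :: rat) = (\<Sum>i\<le>n. of_nat (M choose i) * g c (n-1) i)" for c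
        unfolding g_def by (rule vander_ext) simp
      have v2: "(of_nat ((M + c) choose n) :: rat) = (\<Sum>i\<le>n. of_nat (M choose i) * g c n i)" for c
        unfolding g_def by (rule vander_ext) simp
      show ?thesis unfolding Hf_def by (simp only: v1 v2)
    qed
    also have "\<dots> = (\<Sum>a\<in>{1..n-1}. \<Sum>i\<le>n. of_nat (M choose i) * (g (n - 1 - a) (n - 1) i * S_sum p n a s
       - of_nat (p ^ s) * g (n - 1 - a) n i * Ta p n s a))"
      by (simp add: sum_distrib_left sum_distrib_right sum_subtractf right_diff_distrib algebra_simps)
    also have "\<dots> = (\<Sum>i\<le>n. of_nat (M choose i) * e i)"
      unfolding e_def sum_distrib_left by (rule sum.swap)
    finally show ?thesis .
  qed
  then show ?thesis using eZ by blast
qed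

lemma Hf0: "Hf p n s 0 = 0"
  unfolding Hf_def by (intro sum.neutral) (auto simp: binomial_eq_0)

lemma R_shift: "R_sum p n M (Suc s) = R_sum p n (M * p) s"
  unfolding R_sum_def by (simp add: mult.assoc mult.commute[of p])

end


context fixes p :: nat assumes pp: "prime p" begin

lemma S_R_12: assumes n: "2 \<le> n" shows "S_sum p n 1 2 = R_sum p n 1 2"
proof -
  have "{l \<in> tuplesR p n (1 * p ^ 2). \<forall>i<n. l i < p ^ 2} = tuplesR p n (1 * p ^ 2)"
  proof safe
    fix l i assume l: "l \<in> tuplesR p n (1 * p ^ 2)" and i: "i < n"
    define j :: nat where "j = (if i = 0 then 1 else 0)"
    have j: "j < n" "j \<noteq> i" using n i unfolding j_def by auto
    have ls: "\<forall>i<n. l i \<in> coprimeP p" "(\<Sum>i<n. l i) = p ^ 2" using l unfolding tuplesR_def by auto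
    have "l i + l j = (\<Sum>i'\<in>{i, j}. l i')" using j by simp
    also have "\<dots> \<le> (\<Sum>i<n. l i)" using i j by (intro sum_mono2) auto
    finally have "l i + l j \<le> p ^ 2" using ls by simp
    moreover have "0 < l j" using ls j unfolding coprimeP_def by auto
    ultimately show "l i < p ^ 2" by simp
  qed
  then show ?thesis unfolding S_sum_def R_sum_def by simp
qed

lemma part2:
  assumes n: "2 \<le> n" and np: "n < p"
  shows "vd p (d + 2) (R_sum p n M (d + 2) - of_nat M * R_sum p n 1 2 * of_nat p ^ d)"
proof (induction d arbitrary: M)
  case 0
  obtain e where eZ: "\<And>i. e i \<in> Zp p" and he: "\<And>M. Hf p n 1 M = (\<Sum>i\<le>n. of_nat (M choose i) * e i)"
    using newton_Hf[OF pp, of n 1] by blast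
  have nb: "vd p 2 (Hf p n 1 (M * p) - of_nat M * Hf p n 1 p)"
    by (rule newton_base[OF pp he np Hf0[OF pp] eZ])
  have d1: "vd p 2 (R_sum p n X 1 - Hf p n 1 X)" for X
    using DEC[OF pp, of 1 n X] n by simp
  have eq1: "R_sum p n M 2 = R_sum p n (M * p) 1" using R_shift[OF pp, of n M 1, unfolded Suc_1] .
  have eq2: "R_sum p n 1 2 = R_sum p n p 1" using R_shift[OF pp, of n 1 1, unfolded Suc_1] by simp
  have "R_sum p n M (0 + 2) - of_nat M * R_sum p n 1 2 * of_nat p ^ 0
     = (R_sum p n (M * p) 1 - Hf p n 1 (M * p)) + (Hf p n 1 (M * p) - of_nat M * Hf p n 1 p)
       - of_nat M * (R_sum p n p 1 - Hf p n 1 p)"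
    unfolding eq2 add.left_neutral eq1 by (simp add: algebra_simps)
  also have "vd p 2 \<dots>"
    by (rule vd_diff[OF pp], rule vd_add[OF pp], rule d1, rule nb, rule vd_multZ[OF pp], rule Zp_of_nat[OF pp], rule d1)
  finally show ?case by (simp add: numeral_2_eq_2)
next
  case (Suc d)
  define r where "r = d + 2"
  define C where "C = R_sum p n 1 2"
  obtain e where eZ: "\<And>i. e i \<in> Zp p" and he: "\<And>M. Hf p n r M = (\<Sum>i\<le>n. of_nat (M choose i) * e i)"
    using newton_Hf[OF pp, of n r] by blast
  define e' where "e' i = e i - (if i = 1 then C * of_nat p ^ d else 0)" for i
  define g where "g X = Hf p n r X - of_nat X * C * of_nat p ^ d" for X
  have X1: "(\<Sum>i\<le>n. (of_nat (X choose i) :: rat) * (if i = 1 then C * of_nat p ^ d else 0))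
      = of_nat X * C * of_nat p ^ d" for X
  proof -
    have "(\<Sum>i\<le>n. (of_nat (X choose i) :: rat) * (if i = 1 then C * of_nat p ^ d else 0))
        = (\<Sum>i\<in>{1}. (of_nat (X choose i) :: rat) * (if i = 1 then C * of_nat p ^ d else 0))"
      by (rule sum.mono_neutral_right) (use n in auto)
    then show ?thesis by simp
  qed
  have hg: "g X = (\<Sum>i\<le>n. of_nat (X choose i) * e' i)" for X
    unfolding g_def e'_def he right_diff_distrib sum_subtractf X1 ..
  have dec: "vd p (2 * r) (R_sum p n X r - Hf p n r X)" for X
    using DEC[OF pp, of r n X] n unfolding r_def by simp
  have g0: "vd p (Suc r) (g 0)" unfolding g_def using Hf0[OF pp] vd_0[OF pp] by simp
  have gX: "vd p r (g X)" for X
  proof -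
    have "g X = (R_sum p n X r - of_nat X * C * of_nat p ^ d) - (R_sum p n X r - Hf p n r X)"
      unfolding g_def by simp
    moreover have "vd p r (R_sum p n X r - of_nat X * C * of_nat p ^ d)"
      using Suc.IH unfolding r_def C_def .
    moreover have "vd p r (R_sum p n X r - Hf p n r X)" using vd_mono[OF pp _ dec] by simp
    ultimately show ?thesis using vd_diff[OF pp] by metis
  qed
  have lift: "vd p (Suc r) (g (M * p))"
    by (rule newton_lift[OF pp hg np g0 gX])
  have "R_sum p n M (Suc d + 2) - of_nat M * C * of_nat p ^ Suc d
      = (R_sum p n (M * p) r - Hf p n r (M * p)) + g (M * p)"
    unfolding g_def r_def using R_shift[OF pp, of n M "d + 2"] by (simp add: algebra_simps)
  also have "vd p (Suc r) \<dots>"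
    using vd_mono[OF pp _ dec[of "M * p"]] lift unfolding r_def
    by (intro vd_add[OF pp]) auto
  finally show ?case unfolding r_def C_def by simp
qed

lemma part1:
  assumes n: "2 \<le> n"
  shows "vd p 1 (R_sum p n m 1 - (\<Sum>a=1..n-1. of_nat ((m + n - a - 1) choose (n - 1)) * S_sum p n a 1))"
proof -
  have eq: "Hf p n 1 m - (\<Sum>a=1..n-1. of_nat ((m + n - a - 1) choose (n - 1)) * S_sum p n a 1)
      = of_nat p ^ 1 * (- (\<Sum>a=1..n-1. of_nat ((m + (n - 1 - a)) choose n) * Ta p n 1 a))"
  proof -
    have "Hf p n 1 m - (\<Sum>a=1..n-1. of_nat ((m + n - a - 1) choose (n - 1)) * S_sum p n a 1)
      = (\<Sum>a=1..n-1. - (of_nat p * (of_nat ((m + (n - 1 - a)) choose n) * Ta p n 1 a)))"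
      unfolding Hf_def sum_subtractf[symmetric]
    proof (rule sum.cong[OF refl])
      fix a assume a: "a \<in> {1..n-1}"
      then have "m + n - a - 1 = m + (n - 1 - a)" by auto
      then show "of_nat ((m + (n - 1 - a)) choose (n - 1)) * S_sum p n a 1 -
           of_nat (p ^ 1) * of_nat ((m + (n - 1 - a)) choose n) * Ta p n 1 a -
           of_nat ((m + n - a - 1) choose (n - 1)) * S_sum p n a 1 =
           - (of_nat p * (of_nat ((m + (n - 1 - a)) choose n) * Ta p n 1 a))"
        by simp
    qed
    also have "\<dots> = of_nat p ^ 1 * (- (\<Sum>a=1..n-1. of_nat ((m + (n - 1 - a)) choose n) * Ta p n 1 a))"
      by (simp add: sum_negf sum_distrib_left)
    finally show ?thesis .
  qed
  have v1: "vd p 1 (Hf p n 1 m - (\<Sum>a=1..n-1. of_nat ((m + n - a - 1) choose (n - 1)) * S_sum p n a 1))"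
  proof -
    have "(- (\<Sum>a=1..n-1. of_nat ((m + (n - 1 - a)) choose n) * Ta p n 1 a)) \<in> Zp p"
      by (intro Zp_uminus[OF pp] Zp_sum[OF pp] Zp_mult[OF pp] Zp_of_nat[OF pp] Ta_Zp[OF pp])
    from vd_ppow[OF pp vd_Zp[OF pp this], of 1] show ?thesis unfolding eq by simp
  qed
  have v2: "vd p 1 (R_sum p n m 1 - Hf p n 1 m)"
    using vd_mono[OF pp _ DEC[OF pp, of 1 n m]] n by simp
  have "R_sum p n m 1 - (\<Sum>a=1..n-1. of_nat ((m + n - a - 1) choose (n - 1)) * S_sum p n a 1)
     = (R_sum p n m 1 - Hf p n 1 m) + (Hf p n 1 m - (\<Sum>a=1..n-1. of_nat ((m + n - a - 1) choose (n - 1)) * S_sum p n a 1))"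
    by simp
  then show ?thesis using vd_add[OF pp v2 v1] by simp
qed

end

theorem proposition2p3:
  fixes m n p :: nat
  assumes "0 < m" and "2 \<le> n" and "prime p" and "p > n + 1" and "\<not> p dvd m"
  shows "rat_cong (R_sum p n m 1)
            (\<Sum>a=1..n-1. of_nat ((m + n - a - 1) choose (n - 1)) * S_sum p n a 1) p 1
       \<and> (\<forall>r::nat. r \<ge> 2 \<longrightarrow>
            rat_cong (R_sum p n m r) (of_nat m * S_sum p n 1 2 * of_nat p ^ (r - 2)) p r)"
proof
  show "rat_cong (R_sum p n m 1)
            (\<Sum>a=1..n-1. of_nat ((m + n - a - 1) choose (n - 1)) * S_sum p n a 1) p 1"
    unfolding rat_cong_vd[OF assms(3)] using part1[OF assms(3,2)] .
  show "\<forall>r::nat. r \<ge> 2 \<longrightarrow>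
            rat_cong (R_sum p n m r) (of_nat m * S_sum p n 1 2 * of_nat p ^ (r - 2)) p r"
  proof (intro allI impI)
    fix r :: nat assume r: "2 \<le> r"
    then obtain d where d: "r = d + 2" by (metis add.commute le_Suc_ex)
    have np: "n < p" using assms(4) by simp
    show "rat_cong (R_sum p n m r) (of_nat m * S_sum p n 1 2 * of_nat p ^ (r - 2)) p r"
      unfolding rat_cong_vd[OF assms(3)] d S_R_12[OF assms(3,2)]
      using part2[OF assms(3,2) np, of d m] by simp
  qed
qed


end
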